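(* Consider the stationary mean field model with scalar interaction described in the context, with finite state space $X$. Suppose that (a) for every $m\in[a,b]$ the optimal policy correspondence $G(\cdot,m)$ is single-valued, with unique selection $g(\cdot,m)$; and (b) for every $m\in[a,b]$ the Markov chain $L_{m,g}$ on $X$ is irreducible and aperiodic, so that it has a unique invariant distribution $s^{m,g}$. Define $f:[a,b]\to\mathbb{R}$ by $f(m)=m-M(s^{m,g})$. Run the following bisection procedure (Adaptive Value Function Iteration): set $a_1=a$, $b_1=b$; at iteration $t$, set $m_t=(a_t+b_t)/2$, compute the value function $V(\cdot,m_t)$ (e.g. by value iteration), the optimal policy $g_t=g(\cdot,m_t)$, and the unique invariant distribution $s^{m_t,g_t}$ of $L_{m_t,g_t}$; evaluate $f(m_t)=m_t-M(s^{m_t,g_t})$; if $f(m_t)=0$ stop; if $f(m_t)>0$ set $b_{t+1}=m_t,\ a_{t+1}=a_t$; if $f(m_t)<0$ set $a_{t+1}=m_t,\ b_{t+1}=b_t$. Then the sequence $\{m_t\}$ converges to some $m^*\in[a,b]$ with $f(m^* )=0$ (if the procedure stops at a finite $t$, take $m^*=m_t$), and the pair consisting of the policy $g^*=g(\cdot,m^* )$ and the population state $s^{m^*,g^*}$ constitutes a mean field equilibrium.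
   Context: Model. $X$ is a finite set of individual states; $\mathcal{P}(X)$ is the set of probability measures on $X$ (population states). $A\subseteq\mathbb{R}^q$ is the action set and $\Gamma:X\to 2^A$ is a nonempty compact-valued continuous (upper and lower hemicontinuous) feasibility correspondence. The scalar interaction function $M:\mathcal{P}(X)\to[a,b]$ is continuous, with known bounds $a<b$. Idiosyncratic shocks $\zeta$ are i.i.d. with law $q$ on a compact separable metric space $E$. The transition function $w:X\times A\times[a,b]\times E\to X$ is continuous: an agent in state $x$ taking action $a'$ when the scalar interaction is $m$ moves to $w(x,a',m,\zeta)$. The one-period payoff $\pi:X\times A\times[a,b]\to\mathbb{R}$ is bounded and continuous, and $\beta\in(0,1)$ is the discount factor. For fixed $m\in[a,b]$, $V(x,m)$ is the supremum over (history-dependent, feasible) policies of the expected discounted payoff $\mathbb{E}\sum_{t\ge1}\beta^{t-1}\pi(x(t),a(t),m)$ from initial state $x$; it satisfies the Bellman equation $V(x,m)=\max_{a'\in\Gamma(x)}\{\pi(x,a',m)+\beta\int_E V(w(x,a',m,\zeta),m)\,q(d\zeta)\}$. The optimal policy correspondence is $G(x,m)=\arg\max_{a'\in\Gamma(x)}\{\pi(x,a',m)+\beta\int_E V(w(x,a',m,\zeta),m)\,q(d\zeta)\}$. For a stationary policy $g(x,m)$ and $m\in[a,b]$, $L_{m,g}(x,y)=q(\{\zeta: w(x,g(x,m),m,\zeta)=y\})$. Mean field equilibrium (MFE): a stationary policy $g$ and $s\in\mathcal{P}(X)$ such that (1) $g(x,M(s))\in G(x,M(s))$ for all $x$, and (2)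 $s(y)=\sum_{x\in X}L_{M(s),g}(x,y)s(x)$ for all $y\in X$. *)

theory Defs
  imports "HOL-Analysis.Analysis" "HOL-Probability.Probability"
begin

definition prob_vec :: "real^'x::finite \<Rightarrow> bool" where
  "prob_vec s \<longleftrightarrow> (\<forall>x. 0 \<le> s $ x) \<and> (\<Sum>x\<in>UNIV. s $ x) = 1"

definition pop_states :: "(real^'x::finite) set" where
  "pop_states = {s. prob_vec s}"

text \<open>Expected discounted payoff over the first n periods, from history h
  (list of states visited so far, last element = current state), when following
  the history-dependent (deterministic) policy sigma and the interaction is m.\<close>
fun J :: "('x \<Rightarrow> 'a \<Rightarrow> real \<Rightarrow> real) \<Rightarrow> ('x \<Rightarrow> 'a \<Rightarrow> real \<Rightarrow> 'e \<Rightarrow> 'x)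
          \<Rightarrow> 'e measure \<Rightarrow> real \<Rightarrow> real \<Rightarrow> nat \<Rightarrow> ('x list \<Rightarrow> 'a) \<Rightarrow> 'x list \<Rightarrow> real" where
  "J payoff w q beta m 0 \<sigma> h = 0"
| "J payoff w q beta m (Suc n) \<sigma> h =
     payoff (last h) (\<sigma> h) m
     + beta * (\<integral>\<zeta>. J payoff w q beta m n \<sigma> (h @ [w (last h) (\<sigma> h) m \<zeta>]) \<partial>q)"

definition feasible_policy :: "('x \<Rightarrow> 'a set) \<Rightarrow> ('x list \<Rightarrow> 'a) \<Rightarrow> bool" where
  "feasible_policy \<Gamma> \<sigma> \<longleftrightarrow> (\<forall>h. h \<noteq> [] \<longrightarrow> \<sigma> h \<in> \<Gamma> (last h))"

definition V :: "('x \<Rightarrow> 'a \<Rightarrow> real \<Rightarrow> real) \<Rightarrow> ('x \<Rightarrow> 'a \<Rightarrow> real \<Rightarrow> 'e \<Rightarrow> 'x)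
          \<Rightarrow> 'e measure \<Rightarrow> real \<Rightarrow> ('x \<Rightarrow> 'a set) \<Rightarrow> 'x \<Rightarrow> real \<Rightarrow> real" where
  "V payoff w q beta \<Gamma> x m =
     (SUP \<sigma>\<in>{\<sigma>. feasible_policy \<Gamma> \<sigma>}. lim (\<lambda>n. J payoff w q beta m n \<sigma> [x]))"

definition G :: "('x \<Rightarrow> 'a \<Rightarrow> real \<Rightarrow> real) \<Rightarrow> ('x \<Rightarrow> 'a \<Rightarrow> real \<Rightarrow> 'e \<Rightarrow> 'x)
          \<Rightarrow> 'e measure \<Rightarrow> real \<Rightarrow> ('x \<Rightarrow> 'a set) \<Rightarrow> 'x \<Rightarrow> real \<Rightarrow> 'a set" where
  "G payoff w q beta \<Gamma> x m =
     (let obj = (\<lambda>a'. payoff x a' m + beta * (\<integral>\<zeta>. V payoff w q beta \<Gamma> (w x a' m \<zeta>) m \<partial>q))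
      in {a'\<in>\<Gamma> x. \<forall>b'\<in>\<Gamma> x. obj b' \<le> obj a'})"

definition L :: "('x \<Rightarrow> 'a \<Rightarrow> real \<Rightarrow> 'e \<Rightarrow> 'x) \<Rightarrow> 'e measure
          \<Rightarrow> ('x \<Rightarrow> real \<Rightarrow> 'a) \<Rightarrow> real \<Rightarrow> 'x \<Rightarrow> 'x \<Rightarrow> real" where
  "L w q g m x y = measure q {\<zeta>\<in>space q. w x (g x m) m \<zeta> = y}"

fun nstep :: "('x::finite \<Rightarrow> 'x \<Rightarrow> real) \<Rightarrow> nat \<Rightarrow> 'x \<Rightarrow> 'x \<Rightarrow> real" where
  "nstep P 0 x y = (if x = y then 1 else 0)"
| "nstep P (Suc n) x y = (\<Sum>z\<in>UNIV. nstep P n x z * P z y)"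

definition irreducible :: "('x::finite \<Rightarrow> 'x \<Rightarrow> real) \<Rightarrow> bool" where
  "irreducible P \<longleftrightarrow> (\<forall>x y. \<exists>n>0. nstep P n x y > 0)"

definition aperiodic :: "('x::finite \<Rightarrow> 'x \<Rightarrow> real) \<Rightarrow> bool" where
  "aperiodic P \<longleftrightarrow> (\<forall>x. Gcd {n. n > 0 \<and> nstep P n x x > 0} = (1::nat))"

definition invariant :: "('x::finite \<Rightarrow> 'x \<Rightarrow> real) \<Rightarrow> real^'x \<Rightarrow> bool" where
  "invariant P s \<longleftrightarrow> (\<forall>y. s $ y = (\<Sum>x\<in>UNIV. P x y * s $ x))"

definition inv_dist :: "('x::finite \<Rightarrow> 'x \<Rightarrow> real) \<Rightarrow> real^'x" where
  "inv_dist P = (THE s. prob_vec s \<and> invariant P s)"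

definition is_MFE :: "('x::finite \<Rightarrow> 'a \<Rightarrow> real \<Rightarrow> real) \<Rightarrow> ('x \<Rightarrow> 'a \<Rightarrow> real \<Rightarrow> 'e \<Rightarrow> 'x)
          \<Rightarrow> 'e measure \<Rightarrow> real \<Rightarrow> ('x \<Rightarrow> 'a set) \<Rightarrow> (real^'x \<Rightarrow> real)
          \<Rightarrow> ('x \<Rightarrow> real \<Rightarrow> 'a) \<Rightarrow> real^'x \<Rightarrow> bool" where
  "is_MFE payoff w q beta \<Gamma> M g s \<longleftrightarrow>
     prob_vec s
     \<and> (\<forall>x. g x (M s) \<in> G payoff w q beta \<Gamma> x (M s))
     \<and> (\<forall>y. s $ y = (\<Sum>x\<in>UNIV. L w q g (M s) x y * s $ x))"

text \<open>Adaptive Value Function Iteration (bisection). bisect f a b t = (a_{t+1}, b_{t+1})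
  (0-based). When f vanishes at the midpoint the interval is left unchanged, so the
  midpoint sequence stays constant from then on (the procedure has stopped).\<close>
fun bisect :: "(real \<Rightarrow> real) \<Rightarrow> real \<Rightarrow> real \<Rightarrow> nat \<Rightarrow> real \<times> real" where
  "bisect f a b 0 = (a, b)"
| "bisect f a b (Suc t) =
     (let (l, u) = bisect f a b t; m = (l + u) / 2 in
      if f m = 0 then (l, u) else if f m > 0 then (l, m) else (m, u))"

definition midpt :: "(real \<Rightarrow> real) \<Rightarrow> real \<Rightarrow> real \<Rightarrow> nat \<Rightarrow> real" where
  "midpt f a b t = (fst (bisect f a b t) + snd (bisect f a b t)) / 2"

end

theory Submission
  imports Defs
begin

locale mfg =
  fixes A :: "'a::euclidean_space set"
    and \<Gamma> :: "'x::finite \<Rightarrow> 'a set"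
    and a b :: real
    and q :: "'e::metric_space measure"
    and w :: "'x \<Rightarrow> 'a \<Rightarrow> real \<Rightarrow> 'e \<Rightarrow> 'x"
  assumes ab: "a < b"
    and Gamma: "\<forall>x. \<Gamma> x \<noteq> {} \<and> compact (\<Gamma> x) \<and> \<Gamma> x \<subseteq> A"
    and q_prob: "prob_space q"
    and q_sets: "sets q = sets borel"
    and w_cont: "\<forall>x. continuous_map (top_of_set (A \<times> {a..b} \<times> UNIV)) (discrete_topology UNIV)
                        (\<lambda>(a', m, \<zeta>). w x a' m \<zeta>)"
begin

definition K where "K x a' m y = measure q {\<zeta>\<in>space q. w x a' m \<zeta> = y}"

lemma space_q: "space q = UNIV"
  using sets_eq_imp_space_eq[OF q_sets] by simp

lemma w_open_pre:
  assumes "a' \<in> A" "m \<in> {a..b}"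
  shows "\<exists>U. open U \<and> {p \<in> A \<times> {a..b} \<times> UNIV. (\<lambda>(a', m, \<zeta>). w x a' m \<zeta>) p = y} = (A \<times> {a..b} \<times> UNIV) \<inter> U"
proof -
  have "openin (top_of_set (A \<times> {a..b} \<times> UNIV)) {p \<in> topspace (top_of_set (A \<times> {a..b} \<times> UNIV)). (\<lambda>(a', m, \<zeta>). w x a' m \<zeta>) p \<in> {y}}"
  proof -
    have "continuous_map (top_of_set (A \<times> {a..b} \<times> UNIV)) (discrete_topology UNIV) (\<lambda>(a', m, \<zeta>). w x a' m \<zeta>)"
      using w_cont by blast
    then show ?thesis by (rule openin_continuous_map_preimage) simp
  qed
  then have "openin (top_of_set (A \<times> {a..b} \<times> UNIV)) {p \<in> A \<times> {a..b} \<times> UNIV. (\<lambda>(a', m, \<zeta>). w x a' m \<zeta>) p = y}"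
    by simp
  then show ?thesis by (auto simp: openin_open)
qed

lemma w_eventually:
  assumes p: "\<And>n. fst (p n) \<in> A \<and> snd (p n) \<in> {a..b}" and lim: "p \<longlonglongrightarrow> (a', m)"
    and am: "a' \<in> A" "m \<in> {a..b}"
  shows "eventually (\<lambda>n. w x (fst (p n)) (snd (p n)) \<zeta> = w x a' m \<zeta>) sequentially"
proof -
  obtain U where U: "open U" and eq: "{pp \<in> A \<times> {a..b} \<times> UNIV. (\<lambda>(a', m, \<zeta>). w x a' m \<zeta>) pp = w x a' m \<zeta>} = (A \<times> {a..b} \<times> UNIV) \<inter> U"
    using w_open_pre[OF am, of x "w x a' m \<zeta>"] by blast
  have "(a', m, \<zeta>) \<in> {pp \<in> A \<times> {a..b} \<times> UNIV. (\<lambda>(a', m, \<zeta>). w x a' m \<zeta>) pp = w x a' m \<zeta>}"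
    using am by simp
  then have inO: "(a', m, \<zeta>) \<in> U" by (simp only: eq) simp
  have "(\<lambda>n. (fst (p n), snd (p n), \<zeta>)) \<longlonglongrightarrow> (a', m, \<zeta>)"
    using lim by (intro tendsto_intros) (auto dest: tendsto_fst tendsto_snd)
  hence "eventually (\<lambda>n. (fst (p n), snd (p n), \<zeta>) \<in> U) sequentially"
    using U inO topological_tendstoD by blast
  thus ?thesis
  proof (rule eventually_mono)
    fix n assume "(fst (p n), snd (p n), \<zeta>) \<in> U"
    then have "(fst (p n), snd (p n), \<zeta>) \<in> (A \<times> {a..b} \<times> UNIV) \<inter> U" using p[of n] by auto
    then have "(fst (p n), snd (p n), \<zeta>) \<in> {pp \<in> A \<times> {a..b} \<times> UNIV. (\<lambda>(a', m, \<zeta>). w x a' m \<zeta>) pp = w x a' m \<zeta>}"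
      by (simp only: eq)
    then show "w x (fst (p n)) (snd (p n)) \<zeta> = w x a' m \<zeta>" by simp
  qed
qed

lemma w_sets:
  assumes "a' \<in> A" "m \<in> {a..b}"
  shows "{\<zeta>\<in>space q. w x a' m \<zeta> = y} \<in> sets q"
proof -
  obtain U where U: "open U" and eq: "{pp \<in> A \<times> {a..b} \<times> UNIV. (\<lambda>(a', m, \<zeta>). w x a' m \<zeta>) pp = y} = (A \<times> {a..b} \<times> UNIV) \<inter> U"
    using w_open_pre[OF assms, of x y] by blast
  have "\<And>\<zeta>. (a',m,\<zeta>) \<in> {pp \<in> A \<times> {a..b} \<times> UNIV. (\<lambda>(a', m, \<zeta>). w x a' m \<zeta>) pp = y} \<longleftrightarrow> (a',m,\<zeta>) \<in> (A \<times> {a..b} \<times> UNIV) \<inter> U"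
    using eq by simp
  then have "{\<zeta>\<in>space q. w x a' m \<zeta> = y} = (\<lambda>\<zeta>. (a', m, \<zeta>)) -` U"
    using assms by (auto simp: space_q)
  moreover have "open ((\<lambda>\<zeta>. (a', m, \<zeta>)) -` U)"
    using U by (intro open_vimage continuous_intros) 
  ultimately show ?thesis by (simp add: q_sets)
qed

lemma int_sum:
  assumes "a' \<in> A" "m \<in> {a..b}"
  shows "(\<integral>\<zeta>. F (w x a' m \<zeta>) \<partial>q) = (\<Sum>y\<in>UNIV. F y * K x a' m y)"
proof -
  have fin: "emeasure q S < \<infinity>" for S
  proof -
    interpret prob_space q by (rule q_prob)
    show ?thesis by (simp add: less_top[symmetric])
  qed
  have eq: "(\<lambda>\<zeta>. F (w x a' m \<zeta>)) = (\<lambda>\<zeta>. \<Sum>y\<in>UNIV. F y * indicator {\<zeta>\<in>space q. w x a' m \<zeta> = y} \<zeta>)"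
  proof
    fix \<zeta>
    have "(\<Sum>y\<in>UNIV. F y * indicator {\<zeta>\<in>space q. w x a' m \<zeta> = y} \<zeta>) = (\<Sum>y\<in>{w x a' m \<zeta>}. F y * indicator {\<zeta>\<in>space q. w x a' m \<zeta> = y} \<zeta>)"
      by (intro sum.mono_neutral_right) (auto simp: indicator_def)
    then show "F (w x a' m \<zeta>) = (\<Sum>y\<in>UNIV. F y * indicator {\<zeta>\<in>space q. w x a' m \<zeta> = y} \<zeta>)"
      by (simp add: indicator_def space_q)
  qed
  have "(\<integral>\<zeta>. (\<Sum>y\<in>UNIV. F y * indicator {\<zeta>\<in>space q. w x a' m \<zeta> = y} \<zeta>) \<partial>q)
     = (\<Sum>y\<in>UNIV. (\<integral>\<zeta>. F y * indicator {\<zeta>\<in>space q. w x a' m \<zeta> = y} \<zeta> \<partial>q))"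
    by (rule Bochner_Integration.integral_sum[where f="\<lambda>y \<zeta>. F y * indicator {\<zeta>\<in>space q. w x a' m \<zeta> = y} \<zeta>"])
       (auto intro!: w_sets[OF assms] fin)
  also have "\<dots> = (\<Sum>y\<in>UNIV. F y * K x a' m y)"
    unfolding K_def using w_sets[OF assms] fin
    by (intro sum.cong refl) (simp add: integral_indicator less_top)
  finally show ?thesis unfolding eq .
qed

end

context mfg begin

lemma K_nonneg: "K x a' m y \<ge> 0" by (simp add: K_def)

lemma K_sum1:
  assumes "a' \<in> A" "m \<in> {a..b}"
  shows "(\<Sum>y\<in>UNIV. K x a' m y) = 1"
proof -
  have "(\<integral>\<zeta>. (\<lambda>_. 1::real) (w x a' m \<zeta>) \<partial>q) = (\<Sum>y\<in>UNIV. 1 * K x a' m y)"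
    by (rule int_sum[OF assms])
  moreover have "(\<integral>\<zeta>. (\<lambda>_. 1::real) (w x a' m \<zeta>) \<partial>q) = 1"
    using prob_space.prob_space[OF q_prob] by simp
  ultimately show ?thesis by simp
qed

lemma K_sum_const:
  assumes "a' \<in> A" "m \<in> {a..b}"
  shows "(\<Sum>y\<in>UNIV. K x a' m y * c) = c"
  using K_sum1[OF assms] by (simp add: sum_distrib_right[symmetric])

lemma K_cont: "continuous_on (A \<times> {a..b}) (\<lambda>p. K x (fst p) (snd p) y)"
proof (rule continuous_on_sequentiallyI)
  fix u p assume u: "\<forall>n. u n \<in> A \<times> {a..b}" and p: "p \<in> A \<times> {a..b}" and lim: "u \<longlonglongrightarrow> p"
  have fin: "emeasure q S < \<infinity>" for S
  proof -
    interpret prob_space q by (rule q_prob)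
    show ?thesis by (simp add: less_top[symmetric])
  qed
  have up: "u \<longlonglongrightarrow> (fst p, snd p)" using lim by simp
  have "(\<lambda>n. integral\<^sup>L q (indicator {\<zeta>\<in>space q. w x (fst (u n)) (snd (u n)) \<zeta> = y}))
        \<longlonglongrightarrow> integral\<^sup>L q (indicator {\<zeta>\<in>space q. w x (fst p) (snd p) \<zeta> = y} :: 'e \<Rightarrow> real)"
  proof (rule integral_dominated_convergence[where w="\<lambda>_. 1"])
    show "indicator {\<zeta>\<in>space q. w x (fst p) (snd p) \<zeta> = y} \<in> borel_measurable q"
      using w_sets p by (auto simp: mem_Times_iff)
    show "\<And>i. indicator {\<zeta>\<in>space q. w x (fst (u i)) (snd (u i)) \<zeta> = y} \<in> borel_measurable q"
      using w_sets u by (auto simp: mem_Times_iff)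
    show "integrable q (\<lambda>_. 1::real)"
    proof -
      interpret prob_space q by (rule q_prob)
      show ?thesis by simp
    qed
    show "\<And>i. AE \<zeta> in q. norm (indicator {\<zeta>\<in>space q. w x (fst (u i)) (snd (u i)) \<zeta> = y} \<zeta> :: real) \<le> 1"
      by (auto simp: indicator_def)
    show "AE \<zeta> in q. (\<lambda>i. indicator {\<zeta>\<in>space q. w x (fst (u i)) (snd (u i)) \<zeta> = y} \<zeta> :: real)
            \<longlonglongrightarrow> indicator {\<zeta>\<in>space q. w x (fst p) (snd p) \<zeta> = y} \<zeta>"
    proof (rule AE_I2)
      fix \<zeta>
      have ev: "eventually (\<lambda>n. w x (fst (u n)) (snd (u n)) \<zeta> = w x (fst p) (snd p) \<zeta>) sequentially"
        using w_eventually[OF _ up] u p by (auto simp: mem_Times_iff)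
      show "(\<lambda>i. indicator {\<zeta>\<in>space q. w x (fst (u i)) (snd (u i)) \<zeta> = y} \<zeta> :: real)
            \<longlonglongrightarrow> indicator {\<zeta>\<in>space q. w x (fst p) (snd p) \<zeta> = y} \<zeta>"
        by (rule tendsto_eventually) (use ev in \<open>auto elim!: eventually_mono simp: indicator_def\<close>)
    qed
  qed
  moreover have "integral\<^sup>L q (indicator {\<zeta>\<in>space q. w x (fst v) (snd v) \<zeta> = y} :: 'e \<Rightarrow> real) = K x (fst v) (snd v) y"
    if "v \<in> A \<times> {a..b}" for v
    using w_sets[of "fst v" "snd v" x y] that fin by (auto simp: K_def mem_Times_iff integral_indicator less_top)
  ultimately show "(\<lambda>n. K x (fst (u n)) (snd (u n)) y) \<longlonglongrightarrow> K x (fst p) (snd p) y"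
    using u p by simp
qed

end

lemma finite_delta:
  fixes P :: "'i::finite \<Rightarrow> real \<Rightarrow> bool"
  assumes "\<forall>i. \<exists>d>0. \<forall>d'. 0 < d' \<and> d' \<le> d \<longrightarrow> P i d'"
  shows "\<exists>d>0. \<forall>i. P i d"
proof -
  obtain D where D: "\<And>i. D i > 0" "\<And>i d'. 0 < d' \<Longrightarrow> d' \<le> D i \<Longrightarrow> P i d'"
    using assms by metis
  define d where "d = Min (range D)"
  have "d > 0" unfolding d_def using D(1) by (subst Min_gr_iff) auto
  moreover have "d \<le> D i" for i unfolding d_def by (rule Min_le) auto
  ultimately show ?thesis using D(2) by blast
qed

lemma convergent_geom_diff:
  fixes X :: "nat \<Rightarrow> real"
  assumes "\<And>n. \<bar>X (Suc n) - X n\<bar> \<le> c * r ^ n" "0 \<le> r" "r < 1"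
  shows "convergent X"
proof -
  have s: "summable (\<lambda>n. X (Suc n) - X n)"
    by (rule summable_comparison_test[where g="\<lambda>n. c * r ^ n"])
       (use assms in \<open>auto intro!: summable_mult summable_geometric\<close>)
  have "(\<lambda>n. \<Sum>k<n. X (Suc k) - X k) \<longlonglongrightarrow> (\<Sum>k. X (Suc k) - X k)"
    by (rule summable_LIMSEQ[OF s])
  hence "(\<lambda>n. X 0 + (\<Sum>k<n. X (Suc k) - X k)) \<longlonglongrightarrow> X 0 + (\<Sum>k. X (Suc k) - X k)"
    by (intro tendsto_intros)
  moreover have "X 0 + (\<Sum>k<n. X (Suc k) - X k) = X n" for n
    by (simp add: sum_lessThan_telescope)
  ultimately show ?thesis by (auto simp: convergent_def)
qed

lemma abs_mult_K: "0 \<le> (k::real) \<Longrightarrow> \<bar>v\<bar> \<le> c \<Longrightarrow> \<bar>v * k\<bar> \<le> k * c"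
proof -
  assume k: "0 \<le> k" and v: "\<bar>v\<bar> \<le> c"
  have "k * \<bar>v\<bar> \<le> k * c" by (rule mult_left_mono[OF v k])
  then show ?thesis using k by (simp add: abs_mult mult.commute)
qed

lemma abs_beta: "0 < (beta::real) \<Longrightarrow> \<bar>S\<bar> \<le> c \<Longrightarrow> \<bar>beta * S\<bar> \<le> beta * c"
  by (simp add: abs_mult mult_left_mono)

lemma SUP_close:
  fixes f g :: "'s \<Rightarrow> real"
  assumes "S \<noteq> {}" "\<And>s. s \<in> S \<Longrightarrow> \<bar>f s - g s\<bar> \<le> e"
    and "\<And>s. s \<in> S \<Longrightarrow> \<bar>f s\<bar> \<le> C" "\<And>s. s \<in> S \<Longrightarrow> \<bar>g s\<bar> \<le> C"
  shows "\<bar>(SUP s\<in>S. f s) - (SUP s\<in>S. g s)\<bar> \<le> e"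
proof -
  have bf: "bdd_above (f ` S)" using assms(3) by (auto intro!: bdd_aboveI[where M=C] simp: abs_le_iff)
  have bg: "bdd_above (g ` S)" using assms(4) by (auto intro!: bdd_aboveI[where M=C] simp: abs_le_iff)
  have "(SUP s\<in>S. f s) \<le> (SUP s\<in>S. g s) + e"
  proof (rule cSUP_least[OF assms(1)])
    fix s assume "s \<in> S"
    then have "f s \<le> g s + e" "g s \<le> (SUP s\<in>S. g s)" using assms(2)[of s] cSUP_upper[OF _ bg] by (auto simp: abs_le_iff)
    then show "f s \<le> (SUP s\<in>S. g s) + e" by linarith
  qed
  moreover have "(SUP s\<in>S. g s) \<le> (SUP s\<in>S. f s) + e"
  proof (rule cSUP_least[OF assms(1)])
    fix s assume "s \<in> S"
    then have "g s \<le> f s + e" "f s \<le> (SUP s\<in>S. f s)" using assms(2)[of s] cSUP_upper[OF _ bf] by (auto simp: abs_le_iff)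
    then show "g s \<le> (SUP s\<in>S. f s) + e" by linarith
  qed
  ultimately show ?thesis by linarith
qed

locale mfg2 = mfg A \<Gamma> a b q w
  for A :: "'a::euclidean_space set"
    and \<Gamma> :: "'x::finite \<Rightarrow> 'a set"
    and a b :: real
    and q :: "'e::metric_space measure"
    and w :: "'x \<Rightarrow> 'a \<Rightarrow> real \<Rightarrow> 'e \<Rightarrow> 'x" +
  fixes payoff :: "'x \<Rightarrow> 'a \<Rightarrow> real \<Rightarrow> real"
    and beta :: real
  assumes pi_bounded: "\<exists>B. \<forall>x a' m. a' \<in> A \<longrightarrow> m \<in> {a..b} \<longrightarrow> \<bar>payoff x a' m\<bar> \<le> B"
    and pi_cont: "\<forall>x. continuous_on (A \<times> {a..b}) (\<lambda>(a', m). payoff x a' m)"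
    and beta: "0 < beta" "beta < 1"
begin

definition PB where "PB = (SOME B. \<forall>x a' m. a' \<in> A \<longrightarrow> m \<in> {a..b} \<longrightarrow> \<bar>payoff x a' m\<bar> \<le> B)"

lemma PB: "a' \<in> A \<Longrightarrow> m \<in> {a..b} \<Longrightarrow> \<bar>payoff x a' m\<bar> \<le> PB"
  using someI_ex[OF pi_bounded] unfolding PB_def by blast

lemma Gamma_A: "a' \<in> \<Gamma> x \<Longrightarrow> a' \<in> A" using Gamma by blast

lemma PB_nonneg: "PB \<ge> 0"
proof -
  obtain a' where "a' \<in> \<Gamma> (undefined::'x)" using Gamma by blast
  then have "a' \<in> A" using Gamma_A by blast
  then have "\<bar>payoff (undefined::'x) a' a\<bar> \<le> PB" using ab by (intro PB) auto
  then show ?thesis using abs_ge_zero[of "payoff (undefined::'x) a' a"] by linarith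
qed

abbreviation JJ where "JJ m n \<sigma> h \<equiv> J payoff w q beta m n \<sigma> h"

lemma feas: "feasible_policy \<Gamma> \<sigma> \<Longrightarrow> h \<noteq> [] \<Longrightarrow> \<sigma> h \<in> A"
  unfolding feasible_policy_def using Gamma_A by blast

lemma J_rec:
  assumes "feasible_policy \<Gamma> \<sigma>" "h \<noteq> []" "m \<in> {a..b}"
  shows "JJ m (Suc n) \<sigma> h = payoff (last h) (\<sigma> h) m + beta * (\<Sum>y\<in>UNIV. JJ m n \<sigma> (h @ [y]) * K (last h) (\<sigma> h) m y)"
  using int_sum[OF feas[OF assms(1,2)] assms(3), of "\<lambda>y. JJ m n \<sigma> (h @ [y])" "last h"] by simp

lemma J_bound:
  assumes "feasible_policy \<Gamma> \<sigma>" "h \<noteq> []" "m \<in> {a..b}"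
  shows "\<bar>JJ m n \<sigma> h\<bar> \<le> PB / (1 - beta)"
  using assms(2)
proof (induction n arbitrary: h)
  case 0
  then show ?case using PB_nonneg beta by simp
next
  case (Suc n)
  let ?a = "\<sigma> h" and ?x = "last h"
  have aA: "?a \<in> A" using feas[OF assms(1) Suc.prems] .
  have "\<bar>\<Sum>y\<in>UNIV. JJ m n \<sigma> (h @ [y]) * K ?x ?a m y\<bar> \<le> (\<Sum>y\<in>UNIV. \<bar>JJ m n \<sigma> (h @ [y]) * K ?x ?a m y\<bar>)"
    by (rule sum_abs)
  also have "\<dots> \<le> (\<Sum>y\<in>UNIV. K ?x ?a m y * (PB / (1 - beta)))"
    by (intro sum_mono abs_mult_K[OF K_nonneg] Suc.IH) simp
  also have "\<dots> = PB / (1 - beta)" by (rule K_sum_const[OF aA assms(3)])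
  finally have s: "\<bar>\<Sum>y\<in>UNIV. JJ m n \<sigma> (h @ [y]) * K ?x ?a m y\<bar> \<le> PB / (1 - beta)" .
  have p: "\<bar>payoff ?x ?a m\<bar> \<le> PB" using PB[OF aA assms(3)] .
  have "\<bar>JJ m (Suc n) \<sigma> h\<bar> \<le> PB + beta * (PB / (1 - beta))"
    unfolding J_rec[OF assms(1) Suc.prems assms(3)]
  proof -
    have "\<bar>beta * (\<Sum>y\<in>UNIV. JJ m n \<sigma> (h @ [y]) * K ?x ?a m y)\<bar> \<le> beta * (PB / (1 - beta))"
      by (rule abs_beta[OF beta(1) s])
    then show "\<bar>payoff ?x ?a m + beta * (\<Sum>y\<in>UNIV. JJ m n \<sigma> (h @ [y]) * K ?x ?a m y)\<bar> \<le> PB + beta * (PB / (1 - beta))"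
      using p abs_triangle_ineq[of "payoff ?x ?a m" "beta * (\<Sum>y\<in>UNIV. JJ m n \<sigma> (h @ [y]) * K ?x ?a m y)"] by linarith
  qed
  also have "\<dots> = PB / (1 - beta)" using beta by (simp add: field_simps)
  finally show ?case .
qed

lemma J_step:
  assumes "feasible_policy \<Gamma> \<sigma>" "h \<noteq> []" "m \<in> {a..b}"
  shows "\<bar>JJ m (Suc n) \<sigma> h - JJ m n \<sigma> h\<bar> \<le> PB * beta ^ n"
  using assms(2)
proof (induction n arbitrary: h)
  case 0
  have aA: "\<sigma> h \<in> A" using feas[OF assms(1) 0] .
  show ?case using PB[OF aA assms(3)] J_rec[OF assms(1) 0 assms(3), of 0] by simp
next
  case (Suc n)
  let ?a = "\<sigma> h" and ?x = "last h"
  have aA: "?a \<in> A" using feas[OF assms(1) Suc.prems] .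
  have eqd: "JJ m (Suc (Suc n)) \<sigma> h - JJ m (Suc n) \<sigma> h
      = beta * (\<Sum>y\<in>UNIV. (JJ m (Suc n) \<sigma> (h @ [y]) - JJ m n \<sigma> (h @ [y])) * K ?x ?a m y)"
    unfolding J_rec[OF assms(1) Suc.prems assms(3)] by (simp add: algebra_simps sum_subtractf)
  have bd: "\<bar>\<Sum>y\<in>UNIV. (JJ m (Suc n) \<sigma> (h @ [y]) - JJ m n \<sigma> (h @ [y])) * K ?x ?a m y\<bar> \<le> PB * beta ^ n"
  proof -
    have "\<bar>\<Sum>y\<in>UNIV. (JJ m (Suc n) \<sigma> (h @ [y]) - JJ m n \<sigma> (h @ [y])) * K ?x ?a m y\<bar>
        \<le> (\<Sum>y\<in>UNIV. \<bar>(JJ m (Suc n) \<sigma> (h @ [y]) - JJ m n \<sigma> (h @ [y])) * K ?x ?a m y\<bar>)"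
      by (rule sum_abs)
    also have "\<dots> \<le> (\<Sum>y\<in>UNIV. K ?x ?a m y * (PB * beta ^ n))"
      by (intro sum_mono abs_mult_K[OF K_nonneg] Suc.IH) simp
    also have "\<dots> = PB * beta ^ n" by (rule K_sum_const[OF aA assms(3)])
    finally show ?thesis .
  qed
  have "\<bar>JJ m (Suc (Suc n)) \<sigma> h - JJ m (Suc n) \<sigma> h\<bar> = \<bar>beta * (\<Sum>y\<in>UNIV. (JJ m (Suc n) \<sigma> (h @ [y]) - JJ m n \<sigma> (h @ [y])) * K ?x ?a m y)\<bar>"
    by (simp only: eqd)
  also have "\<dots> \<le> beta * (PB * beta ^ n)" by (rule abs_beta[OF beta(1) bd])
  finally have "\<bar>JJ m (Suc (Suc n)) \<sigma> h - JJ m (Suc n) \<sigma> h\<bar> \<le> beta * (PB * beta ^ n)" .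
  moreover have "beta * (PB * beta ^ n) = PB * beta ^ Suc n" by simp
  ultimately show ?case by (simp only:)
qed

lemma J_conv:
  assumes "feasible_policy \<Gamma> \<sigma>" "h \<noteq> []" "m \<in> {a..b}"
  shows "convergent (\<lambda>n. JJ m n \<sigma> h)"
  by (rule convergent_geom_diff[where c=PB and r=beta]) (use J_step[OF assms] beta in auto)

definition Jl where "Jl m \<sigma> h = lim (\<lambda>n. JJ m n \<sigma> h)"

lemma Jl_lim:
  assumes "feasible_policy \<Gamma> \<sigma>" "h \<noteq> []" "m \<in> {a..b}"
  shows "(\<lambda>n. JJ m n \<sigma> h) \<longlonglongrightarrow> Jl m \<sigma> h"
  unfolding Jl_def using J_conv[OF assms] convergent_LIMSEQ_iff by blast

lemma Jl_bound:
  assumes "feasible_policy \<Gamma> \<sigma>" "h \<noteq> []" "m \<in> {a..b}"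
  shows "\<bar>Jl m \<sigma> h\<bar> \<le> PB / (1 - beta)"
proof -
  have "(\<lambda>n. \<bar>JJ m n \<sigma> h\<bar>) \<longlonglongrightarrow> \<bar>Jl m \<sigma> h\<bar>" by (intro tendsto_intros Jl_lim[OF assms])
  then show ?thesis using J_bound[OF assms] by (intro LIMSEQ_le_const2) auto
qed

lemma feasible_exists: "\<exists>\<sigma>. feasible_policy \<Gamma> \<sigma>"
proof -
  have "feasible_policy \<Gamma> (\<lambda>h. SOME a'. a' \<in> \<Gamma> (last h))"
    unfolding feasible_policy_def using Gamma by (auto simp: some_in_eq)
  then show ?thesis by blast
qed

end

lemma unif_slice:
  fixes f :: "'a::metric_space \<times> real \<Rightarrow> real"
  assumes "continuous_on (S1 \<times> S2) f" "compact (S1 \<times> S2)" "e > 0"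
  shows "\<exists>d>0. \<forall>a'\<in>S1. \<forall>m\<in>S2. \<forall>m'\<in>S2. \<bar>m - m'\<bar> < d \<longrightarrow> \<bar>f (a', m) - f (a', m')\<bar> < e"
proof -
  have "uniformly_continuous_on (S1 \<times> S2) f" by (rule compact_uniformly_continuous[OF assms(1,2)])
  then obtain d where d: "d > 0" "\<And>p p'. p \<in> S1 \<times> S2 \<Longrightarrow> p' \<in> S1 \<times> S2 \<Longrightarrow> dist p' p < d \<Longrightarrow> dist (f p') (f p) < e"
    unfolding uniformly_continuous_on_def using assms(3) by metis
  show ?thesis
  proof (intro exI[of _ d] conjI ballI impI d(1))
    fix a' m m' assume "a' \<in> S1" "m \<in> S2" "m' \<in> S2" "\<bar>m - m'\<bar> < d"
    then have "dist (f (a', m)) (f (a', m')) < e"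
      by (intro d(2)) (auto simp: dist_Pair_Pair dist_real_def)
    then show "\<bar>f (a', m) - f (a', m')\<bar> < e" by (simp add: dist_real_def)
  qed
qed

lemma c0_alg:
  fixes e c X bt :: real
  assumes "c * (1 - bt) = 1 + bt * X"
  shows "e + bt * (e * c + X * e) = e * c"
  using assms by algebra

context mfg2 begin

lemma unif_eps:
  assumes "\<epsilon> > 0"
  shows "\<exists>\<delta>>0. \<forall>x y. \<forall>a'\<in>\<Gamma> x. \<forall>m\<in>{a..b}. \<forall>m'\<in>{a..b}. \<bar>m - m'\<bar> < \<delta> \<longrightarrow>
           \<bar>payoff x a' m - payoff x a' m'\<bar> \<le> \<epsilon> \<and> \<bar>K x a' m y - K x a' m' y\<bar> \<le> \<epsilon>"
proof -
  define Q where "Q i \<delta> \<longleftrightarrow> (\<forall>a'\<in>\<Gamma> (fst i). \<forall>m\<in>{a..b}. \<forall>m'\<in>{a..b}. \<bar>m - m'\<bar> < \<delta> \<longrightarrow>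
           \<bar>payoff (fst i) a' m - payoff (fst i) a' m'\<bar> \<le> \<epsilon> \<and> \<bar>K (fst i) a' m (snd i) - K (fst i) a' m' (snd i)\<bar> \<le> \<epsilon>)"
    for i :: "'x \<times> 'x" and \<delta>
  have "\<forall>i. \<exists>d>0. \<forall>d'. 0 < d' \<and> d' \<le> d \<longrightarrow> Q i d'"
  proof
    fix i :: "'x \<times> 'x"
    obtain x y where i: "i = (x, y)" by fastforce
    have cpt: "compact (\<Gamma> x \<times> {a..b})" using Gamma by (auto intro: compact_Times)
    have sub: "\<Gamma> x \<times> {a..b} \<subseteq> A \<times> {a..b}" using Gamma by auto
    have c1: "continuous_on (\<Gamma> x \<times> {a..b}) (\<lambda>p. payoff x (fst p) (snd p))"
      using continuous_on_subset[OF pi_cont[rule_format, of x] sub] by (simp add: case_prod_unfold)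
    have c2: "continuous_on (\<Gamma> x \<times> {a..b}) (\<lambda>p. K x (fst p) (snd p) y)"
      using continuous_on_subset[OF K_cont sub] .
    obtain d1 where d1: "d1 > 0" "\<forall>a'\<in>\<Gamma> x. \<forall>m\<in>{a..b}. \<forall>m'\<in>{a..b}. \<bar>m - m'\<bar> < d1 \<longrightarrow> \<bar>payoff x a' m - payoff x a' m'\<bar> < \<epsilon>"
      using unif_slice[OF c1 cpt assms] by auto
    obtain d2 where d2: "d2 > 0" "\<forall>a'\<in>\<Gamma> x. \<forall>m\<in>{a..b}. \<forall>m'\<in>{a..b}. \<bar>m - m'\<bar> < d2 \<longrightarrow> \<bar>K x a' m y - K x a' m' y\<bar> < \<epsilon>"
      using unif_slice[OF c2 cpt assms] by auto
    have "Q i d'" if "0 < d'" "d' \<le> min d1 d2" for d'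
      unfolding Q_def i fst_conv snd_conv
    proof (intro ballI impI)
      fix a' m m' assume "a' \<in> \<Gamma> x" "m \<in> {a..b}" "m' \<in> {a..b}" "\<bar>m - m'\<bar> < d'"
      moreover have "d' \<le> d1" "d' \<le> d2" using that by auto
      ultimately show "\<bar>payoff x a' m - payoff x a' m'\<bar> \<le> \<epsilon> \<and> \<bar>K x a' m y - K x a' m' y\<bar> \<le> \<epsilon>"
        using d1(2) d2(2) by (smt (verit))
    qed
    moreover have "min d1 d2 > 0" using d1 d2 by simp
    ultimately show "\<exists>d>0. \<forall>d'. 0 < d' \<and> d' \<le> d \<longrightarrow> Q i d'" by blast
  qed
  then obtain \<delta> where "\<delta> > 0" "\<forall>i. Q i \<delta>" using finite_delta[of Q] by blast
  then show ?thesis unfolding Q_def by fastforce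
qed

definition c0 where "c0 = (1 + beta * real CARD('x) * (PB / (1 - beta))) / (1 - beta)"

lemma c0_pos: "c0 > 0"
  unfolding c0_def using beta PB_nonneg by (intro divide_pos_pos add_pos_nonneg) auto

lemma J_close:
  assumes eps: "\<forall>x y. \<forall>a'\<in>\<Gamma> x. \<bar>payoff x a' m - payoff x a' m'\<bar> \<le> \<epsilon> \<and> \<bar>K x a' m y - K x a' m' y\<bar> \<le> \<epsilon>"
    and e0: "\<epsilon> \<ge> 0"
    and mm: "m \<in> {a..b}" "m' \<in> {a..b}"
    and \<sigma>: "feasible_policy \<Gamma> \<sigma>"
    and h: "h \<noteq> []"
  shows "\<bar>JJ m n \<sigma> h - JJ m' n \<sigma> h\<bar> \<le> \<epsilon> * c0"
  using h
proof (induction n arbitrary: h)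
  case 0
  then show ?case using e0 c0_pos by simp
next
  case (Suc n)
  let ?a = "\<sigma> h" and ?x = "last h"
  have aG: "?a \<in> \<Gamma> ?x" using \<sigma> Suc.prems unfolding feasible_policy_def by blast
  have aA: "?a \<in> A" using Gamma_A[OF aG] .
  define D where "D y = JJ m n \<sigma> (h @ [y]) - JJ m' n \<sigma> (h @ [y])" for y
  define E where "E y = K ?x ?a m y - K ?x ?a m' y" for y
  have split: "(\<Sum>y\<in>UNIV. JJ m n \<sigma> (h @ [y]) * K ?x ?a m y) - (\<Sum>y\<in>UNIV. JJ m' n \<sigma> (h @ [y]) * K ?x ?a m' y)
     = (\<Sum>y\<in>UNIV. D y * K ?x ?a m y) + (\<Sum>y\<in>UNIV. JJ m' n \<sigma> (h @ [y]) * E y)"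
    unfolding D_def E_def by (simp add: sum.distrib[symmetric] sum_subtractf[symmetric] algebra_simps)
  have b1: "\<bar>\<Sum>y\<in>UNIV. D y * K ?x ?a m y\<bar> \<le> \<epsilon> * c0"
  proof -
    have "\<bar>\<Sum>y\<in>UNIV. D y * K ?x ?a m y\<bar> \<le> (\<Sum>y\<in>UNIV. \<bar>D y * K ?x ?a m y\<bar>)" by (rule sum_abs)
    also have "\<dots> \<le> (\<Sum>y\<in>UNIV. K ?x ?a m y * (\<epsilon> * c0))"
      unfolding D_def by (intro sum_mono abs_mult_K[OF K_nonneg] Suc.IH) simp
    also have "\<dots> = \<epsilon> * c0" by (rule K_sum_const[OF aA mm(1)])
    finally show ?thesis .
  qed
  have b2: "\<bar>\<Sum>y\<in>UNIV. JJ m' n \<sigma> (h @ [y]) * E y\<bar> \<le> real CARD('x) * (PB / (1 - beta)) * \<epsilon>"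
  proof -
    have "\<bar>\<Sum>y\<in>UNIV. JJ m' n \<sigma> (h @ [y]) * E y\<bar> \<le> (\<Sum>y\<in>UNIV. \<bar>JJ m' n \<sigma> (h @ [y]) * E y\<bar>)" by (rule sum_abs)
    also have "\<dots> \<le> (\<Sum>y\<in>(UNIV::'x set). (PB / (1 - beta)) * \<epsilon>)"
    proof (intro sum_mono)
      fix y
      have "\<bar>JJ m' n \<sigma> (h @ [y])\<bar> \<le> PB / (1 - beta)" using J_bound[OF \<sigma> _ mm(2)] by simp
      moreover have "\<bar>E y\<bar> \<le> \<epsilon>" unfolding E_def using eps aG by blast
      ultimately show "\<bar>JJ m' n \<sigma> (h @ [y]) * E y\<bar> \<le> PB / (1 - beta) * \<epsilon>"
        unfolding abs_mult by (intro mult_mono) auto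
    qed
    also have "\<dots> = real CARD('x) * (PB / (1 - beta)) * \<epsilon>" by simp
    finally show ?thesis .
  qed
  have p: "\<bar>payoff ?x ?a m - payoff ?x ?a m'\<bar> \<le> \<epsilon>" using eps aG by blast
  have eq: "JJ m (Suc n) \<sigma> h - JJ m' (Suc n) \<sigma> h = (payoff ?x ?a m - payoff ?x ?a m')
     + beta * ((\<Sum>y\<in>UNIV. D y * K ?x ?a m y) + (\<Sum>y\<in>UNIV. JJ m' n \<sigma> (h @ [y]) * E y))"
    unfolding J_rec[OF \<sigma> Suc.prems mm(1)] J_rec[OF \<sigma> Suc.prems mm(2)] split[symmetric] by (simp add: algebra_simps)
  have "\<bar>JJ m (Suc n) \<sigma> h - JJ m' (Suc n) \<sigma> h\<bar> \<le> \<epsilon> + beta * (\<epsilon> * c0 + real CARD('x) * (PB / (1 - beta)) * \<epsilon>)"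
  proof -
    have "\<bar>(\<Sum>y\<in>UNIV. D y * K ?x ?a m y) + (\<Sum>y\<in>UNIV. JJ m' n \<sigma> (h @ [y]) * E y)\<bar>
          \<le> \<epsilon> * c0 + real CARD('x) * (PB / (1 - beta)) * \<epsilon>" using b1 b2 by linarith
    then have "\<bar>beta * ((\<Sum>y\<in>UNIV. D y * K ?x ?a m y) + (\<Sum>y\<in>UNIV. JJ m' n \<sigma> (h @ [y]) * E y))\<bar>
          \<le> beta * (\<epsilon> * c0 + real CARD('x) * (PB / (1 - beta)) * \<epsilon>)" by (rule abs_beta[OF beta(1)])
    then show ?thesis unfolding eq using p by linarith
  qed
  also have "\<dots> = \<epsilon> * c0"
  proof -
    have h: "c0 * (1 - beta) = 1 + beta * (real CARD('x) * (PB / (1 - beta)))"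
      unfolding c0_def using beta by (simp add: mult.assoc)
    show ?thesis by (rule c0_alg[OF h])
  qed
  finally show ?case .
qed

lemma Jl_close:
  assumes eps: "\<forall>x y. \<forall>a'\<in>\<Gamma> x. \<bar>payoff x a' m - payoff x a' m'\<bar> \<le> \<epsilon> \<and> \<bar>K x a' m y - K x a' m' y\<bar> \<le> \<epsilon>"
    and e0: "\<epsilon> \<ge> 0"
    and mm: "m \<in> {a..b}" "m' \<in> {a..b}"
    and \<sigma>: "feasible_policy \<Gamma> \<sigma>"
    and h: "h \<noteq> []"
  shows "\<bar>Jl m \<sigma> h - Jl m' \<sigma> h\<bar> \<le> \<epsilon> * c0"
proof -
  have "(\<lambda>n. \<bar>JJ m n \<sigma> h - JJ m' n \<sigma> h\<bar>) \<longlonglongrightarrow> \<bar>Jl m \<sigma> h - Jl m' \<sigma> h\<bar>"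
    by (intro tendsto_intros Jl_lim[OF \<sigma> h mm(1)] Jl_lim[OF \<sigma> h mm(2)])
  then show ?thesis using J_close[OF assms] by (intro LIMSEQ_le_const2) auto
qed

abbreviation VV where "VV x m \<equiv> V payoff w q beta \<Gamma> x m"

lemma V_eq: "VV x m = (SUP \<sigma>\<in>{\<sigma>. feasible_policy \<Gamma> \<sigma>}. Jl m \<sigma> [x])"
  unfolding V_def Jl_def by simp

lemma V_close:
  assumes eps: "\<forall>x y. \<forall>a'\<in>\<Gamma> x. \<bar>payoff x a' m - payoff x a' m'\<bar> \<le> \<epsilon> \<and> \<bar>K x a' m y - K x a' m' y\<bar> \<le> \<epsilon>"
    and e0: "\<epsilon> \<ge> 0"
    and mm: "m \<in> {a..b}" "m' \<in> {a..b}"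
  shows "\<bar>VV x m - VV x m'\<bar> \<le> \<epsilon> * c0"
  unfolding V_eq
  by (rule SUP_close[where C="PB / (1 - beta)"])
     (use feasible_exists Jl_close[OF assms] Jl_bound mm in auto)

lemma V_bound:
  assumes "m \<in> {a..b}"
  shows "\<bar>VV x m\<bar> \<le> PB / (1 - beta)"
proof -
  obtain \<sigma>0 where s0: "feasible_policy \<Gamma> \<sigma>0" using feasible_exists by blast
  have bdd: "bdd_above ((\<lambda>\<sigma>. Jl m \<sigma> [x]) ` {\<sigma>. feasible_policy \<Gamma> \<sigma>})"
    using Jl_bound assms by (auto intro!: bdd_aboveI[where M="PB / (1 - beta)"] simp: abs_le_iff)
  have up: "VV x m \<le> PB / (1 - beta)" unfolding V_eq
    using Jl_bound assms s0 by (intro cSUP_least) (auto simp: abs_le_iff)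
  have "Jl m \<sigma>0 [x] \<le> VV x m" unfolding V_eq using s0 by (intro cSUP_upper[OF _ bdd]) auto
  moreover have "- (PB / (1 - beta)) \<le> Jl m \<sigma>0 [x]" using Jl_bound[OF s0 _ assms, of "[x]"] by (simp add: abs_le_iff)
  ultimately show ?thesis using up by (simp add: abs_le_iff)
qed

lemma V_cont: "continuous_on {a..b} (\<lambda>m. VV x m)"
  unfolding continuous_on_iff
proof (intro ballI allI impI)
  fix m e :: real assume m: "m \<in> {a..b}" and e: "e > 0"
  define \<epsilon> where "\<epsilon> = e / (2 * c0)"
  have ep: "\<epsilon> > 0" unfolding \<epsilon>_def using e c0_pos by simp
  obtain \<delta> where d: "\<delta> > 0" and dd: "\<forall>x y. \<forall>a'\<in>\<Gamma> x. \<forall>m\<in>{a..b}. \<forall>m'\<in>{a..b}. \<bar>m - m'\<bar> < \<delta> \<longrightarrow>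
           \<bar>payoff x a' m - payoff x a' m'\<bar> \<le> \<epsilon> \<and> \<bar>K x a' m y - K x a' m' y\<bar> \<le> \<epsilon>"
    using unif_eps[OF ep] by blast
  show "\<exists>d>0. \<forall>m'\<in>{a..b}. dist m' m < d \<longrightarrow> dist (VV x m') (VV x m) < e"
  proof (intro exI[of _ \<delta>] conjI ballI impI d)
    fix m' assume m': "m' \<in> {a..b}" and "dist m' m < \<delta>"
    then have "\<bar>m' - m\<bar> < \<delta>" by (simp add: dist_real_def)
    then have "\<bar>VV x m' - VV x m\<bar> \<le> \<epsilon> * c0"
      using dd m m' ep by (intro V_close) auto
    also have "\<dots> < e" unfolding \<epsilon>_def using c0_pos e by simp
    finally show "dist (VV x m') (VV x m) < e" by (simp add: dist_real_def)
  qed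
qed

end

locale mfg3 = mfg2 A \<Gamma> a b q w payoff beta
  for A :: "'a::euclidean_space set"
    and \<Gamma> :: "'x::finite \<Rightarrow> 'a set"
    and a b :: real
    and q :: "'e::metric_space measure"
    and w :: "'x \<Rightarrow> 'a \<Rightarrow> real \<Rightarrow> 'e \<Rightarrow> 'x"
    and payoff :: "'x \<Rightarrow> 'a \<Rightarrow> real \<Rightarrow> real"
    and beta :: real +
  fixes g :: "'x \<Rightarrow> real \<Rightarrow> 'a"
  assumes single_valued: "\<forall>m\<in>{a..b}. \<forall>x. G payoff w q beta \<Gamma> x m = {g x m}"
begin

definition obj where "obj x p = payoff x (fst p) (snd p) + beta * (\<Sum>y\<in>UNIV. VV y (snd p) * K x (fst p) (snd p) y)"

lemma G_eq:
  assumes m: "m \<in> {a..b}"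
  shows "G payoff w q beta \<Gamma> x m = {a'\<in>\<Gamma> x. \<forall>b'\<in>\<Gamma> x. obj x (b', m) \<le> obj x (a', m)}"
proof -
  define P where "P a' = payoff x a' m + beta * (\<integral>\<zeta>. VV (w x a' m \<zeta>) m \<partial>q)" for a'
  have eq: "P a' = obj x (a', m)" if "a' \<in> \<Gamma> x" for a'
  proof -
    have aA: "a' \<in> A" using that by (rule Gamma_A)
    have "(\<integral>\<zeta>. VV (w x a' m \<zeta>) m \<partial>q) = (\<Sum>y\<in>UNIV. VV y m * K x a' m y)" by (rule int_sum[OF aA m])
    then show ?thesis unfolding obj_def P_def by simp
  qed
  have "G payoff w q beta \<Gamma> x m = {a'\<in>\<Gamma> x. \<forall>b'\<in>\<Gamma> x. P b' \<le> P a'}"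
    unfolding G_def Let_def P_def by simp
  also have "\<dots> = {a'\<in>\<Gamma> x. \<forall>b'\<in>\<Gamma> x. obj x (b', m) \<le> obj x (a', m)}"
  proof (intro Collect_cong conj_cong refl)
    fix a' assume a': "a' \<in> \<Gamma> x"
    show "(\<forall>b'\<in>\<Gamma> x. P b' \<le> P a') = (\<forall>b'\<in>\<Gamma> x. obj x (b', m) \<le> obj x (a', m))"
      using eq eq[OF a'] by (intro ball_cong refl) simp
  qed
  finally show ?thesis .
qed

lemma g_prop:
  assumes m: "m \<in> {a..b}"
  shows "g x m \<in> \<Gamma> x \<and> (\<forall>b'\<in>\<Gamma> x. obj x (b', m) \<le> obj x (g x m, m))"
proof -
  have "g x m \<in> G payoff w q beta \<Gamma> x m" using single_valued m by simp
  then show ?thesis unfolding G_eq[OF m] by simp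
qed

lemma g_in: "m \<in> {a..b} \<Longrightarrow> g x m \<in> \<Gamma> x"
  using g_prop by simp

lemma g_opt: "m \<in> {a..b} \<Longrightarrow> b' \<in> \<Gamma> x \<Longrightarrow> obj x (b', m) \<le> obj x (g x m, m)"
  using g_prop by simp

lemma obj_cont: "continuous_on (\<Gamma> x \<times> {a..b}) (obj x)"
proof -
  have sub: "\<Gamma> x \<times> {a..b} \<subseteq> A \<times> {a..b}" using Gamma by auto
  have c1: "continuous_on (\<Gamma> x \<times> {a..b}) (\<lambda>p. payoff x (fst p) (snd p))"
    using continuous_on_subset[OF pi_cont[rule_format, of x] sub] by (simp add: case_prod_unfold)
  have c2: "continuous_on (\<Gamma> x \<times> {a..b}) (\<lambda>p. K x (fst p) (snd p) y)" for y
    using continuous_on_subset[OF K_cont sub] .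
  have c3: "continuous_on (\<Gamma> x \<times> {a..b}) (\<lambda>p. VV y (snd p))" for y
    by (rule continuous_on_compose2[OF V_cont[of y] continuous_on_snd]) auto
  show ?thesis unfolding obj_def
    by (intro continuous_on_add c1 continuous_on_mult continuous_on_const continuous_on_sum c2 c3)
qed

lemma g_cont: "continuous_on {a..b} (g x)"
proof (rule continuous_from_closed_graph[where T="\<Gamma> x"])
  show "compact (\<Gamma> x)" using Gamma by blast
  show "g x \<in> {a..b} \<rightarrow> \<Gamma> x" using g_in by blast
  define S where "S = {a..b} \<times> \<Gamma> x"
  have Sc: "closed S" unfolding S_def using Gamma by (intro closed_Times compact_imp_closed) auto
  define h where "h b' p = obj x (b', fst p) - obj x (snd p, fst p)" for b' p
  have hc: "continuous_on S (h b')" if "b' \<in> \<Gamma> x" for b'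
  proof -
    have "continuous_on S (\<lambda>p. obj x (b', fst p))"
      by (rule continuous_on_compose2[OF obj_cont]) (auto intro!: continuous_intros simp: S_def that)
    moreover have "continuous_on S (\<lambda>p. obj x (snd p, fst p))"
      by (rule continuous_on_compose2[OF obj_cont]) (auto intro!: continuous_intros simp: S_def)
    ultimately show ?thesis unfolding h_def by (intro continuous_on_diff)
  qed
  have eq: "(\<lambda>m. (m, g x m)) ` {a..b} = S \<inter> (\<Inter>b'\<in>\<Gamma> x. S \<inter> h b' -` {..0})"
  proof (intro equalityI subsetI)
    fix p assume "p \<in> (\<lambda>m. (m, g x m)) ` {a..b}"
    then obtain m where m: "m \<in> {a..b}" "p = (m, g x m)" by blast
    then show "p \<in> S \<inter> (\<Inter>b'\<in>\<Gamma> x. S \<inter> h b' -` {..0})"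
      using g_in[OF m(1)] g_opt[OF m(1)] by (auto simp: S_def h_def)
  next
    fix p assume p: "p \<in> S \<inter> (\<Inter>b'\<in>\<Gamma> x. S \<inter> h b' -` {..0})"
    obtain m a' where pm: "p = (m, a')" by fastforce
    have m: "m \<in> {a..b}" and a': "a' \<in> \<Gamma> x" using p pm by (auto simp: S_def)
    have "\<forall>b'\<in>\<Gamma> x. obj x (b', m) \<le> obj x (a', m)"
    proof
      fix b' assume "b' \<in> \<Gamma> x"
      then have "p \<in> h b' -` {..0}" using p by blast
      then show "obj x (b', m) \<le> obj x (a', m)" using pm by (simp add: h_def)
    qed
    then have "a' \<in> G payoff w q beta \<Gamma> x m" using a' by (simp add: G_eq[OF m])
    then have "a' = g x m" using single_valued m by simp
    then show "p \<in> (\<lambda>m. (m, g x m)) ` {a..b}" using pm m by blast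
  qed
  show "closed ((\<lambda>m. (m, g x m)) ` {a..b})"
  proof -
    have cl: "closed (S \<inter> h b' -` {..0})" if "b' \<in> \<Gamma> x" for b'
      by (rule continuous_closed_preimage[OF hc[OF that] Sc closed_atMost])
    show ?thesis unfolding eq using Sc cl by (intro closed_Int closed_INT) auto
  qed
qed

lemma L_eq: "L w q g m x y = K x (g x m) m y" by (simp add: L_def K_def)

lemma L_cont: "continuous_on {a..b} (\<lambda>m. L w q g m x y)"
  unfolding L_eq
  by (rule continuous_on_compose2[OF K_cont, where f="\<lambda>m. (g x m, m)", simplified])
     (auto intro!: continuous_intros g_cont Gamma_A g_in)

lemma L_nonneg: "L w q g m x y \<ge> 0" by (simp add: L_eq K_nonneg)

lemma L_sum1: "m \<in> {a..b} \<Longrightarrow> (\<Sum>y\<in>UNIV. L w q g m x y) = 1"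
  unfolding L_eq by (rule K_sum1[OF Gamma_A[OF g_in]])

end

definition stoch :: "('x::finite \<Rightarrow> 'x \<Rightarrow> real) \<Rightarrow> bool" where
  "stoch P \<longleftrightarrow> (\<forall>x y. 0 \<le> P x y) \<and> (\<forall>x. (\<Sum>y\<in>UNIV. P x y) = 1)"

lemma nstep_nonneg: "stoch P \<Longrightarrow> nstep P n x y \<ge> 0"
  by (induction n arbitrary: y) (auto simp: stoch_def intro!: sum_nonneg)

lemma inv_nstep:
  assumes "invariant P s"
  shows "s $ y = (\<Sum>x\<in>UNIV. nstep P n x y * s $ x)"
proof (induction n arbitrary: y)
  case 0
  have "(\<Sum>x\<in>UNIV. nstep P 0 x y * s $ x) = (\<Sum>x\<in>UNIV. if x = y then s $ x else 0)"
    by (intro sum.cong) auto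
  also have "\<dots> = s $ y" by simp
  finally show ?case by simp
next
  case (Suc n)
  have "(\<Sum>x\<in>UNIV. nstep P (Suc n) x y * s $ x) = (\<Sum>x\<in>UNIV. \<Sum>z\<in>UNIV. nstep P n x z * P z y * s $ x)"
    by (simp add: sum_distrib_right)
  also have "\<dots> = (\<Sum>z\<in>UNIV. \<Sum>x\<in>UNIV. nstep P n x z * P z y * s $ x)" by (rule sum.swap)
  also have "\<dots> = (\<Sum>z\<in>UNIV. P z y * (\<Sum>x\<in>UNIV. nstep P n x z * s $ x))"
    by (intro sum.cong refl) (simp add: sum_distrib_left mult_ac)
  also have "\<dots> = (\<Sum>z\<in>UNIV. P z y * s $ z)" by (simp add: Suc.IH[symmetric])
  also have "\<dots> = s $ y" using assms unfolding invariant_def by metis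
  finally show ?case by simp
qed

lemma inv_pos:
  assumes P: "stoch P" "irreducible P" and s: "prob_vec s" "invariant P s"
  shows "s $ y > 0"
proof -
  obtain x0 where x0: "s $ x0 > 0"
  proof (rule ccontr)
    assume nt: "\<not> thesis"
    have "s $ x \<le> 0" for x
    proof (rule ccontr)
      assume "\<not> s $ x \<le> 0"
      then have "s $ x > 0" by simp
      then show False using that nt by blast
    qed
    then have "\<forall>x. s $ x \<le> 0" by blast
    then have "(\<Sum>x\<in>UNIV. s $ x) \<le> 0" by (intro sum_nonpos) auto
    then show False using s(1) by (simp add: prob_vec_def)
  qed
  obtain n where n: "nstep P n x0 y > 0" using P(2) unfolding irreducible_def by blast
  have "nstep P n x0 y * s $ x0 \<le> (\<Sum>x\<in>UNIV. nstep P n x y * s $ x)"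
    using nstep_nonneg[OF P(1)] s(1) unfolding prob_vec_def
    by (intro member_le_sum[where f="\<lambda>x. nstep P n x y * s $ x"]) auto
  then have "nstep P n x0 y * s $ x0 \<le> s $ y" by (simp add: inv_nstep[OF s(2), symmetric])
  moreover have "nstep P n x0 y * s $ x0 > 0" using n x0 by simp
  ultimately show ?thesis by linarith
qed

lemma inv_unique:
  assumes P: "stoch P" "irreducible P" and s: "prob_vec s" "invariant P s" and t: "prob_vec t" "invariant P t"
  shows "s = t"
proof -
  have tpos: "\<And>x. t $ x > 0" using inv_pos[OF P t] .
  define c where "c = Min (range (\<lambda>x. s $ x / t $ x))"
  have cle: "c \<le> s $ x / t $ x" for x unfolding c_def by (rule Min_le) auto
  have "c \<in> range (\<lambda>x. s $ x / t $ x)" unfolding c_def by (rule Min_in) auto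
  then obtain x0 where x0: "c = s $ x0 / t $ x0" by auto
  define u where "u = s - c *\<^sub>R t"
  have u: "u $ x = s $ x - c * t $ x" for x by (simp add: u_def)
  have u_nonneg: "u $ x \<ge> 0" for x using cle[of x] tpos[of x] by (simp add: u field_simps)
  have u0: "u $ x0 = 0" using tpos[of x0] by (simp add: u x0)
  have u_inv: "invariant P u"
    unfolding invariant_def
  proof
    fix y
    have "(\<Sum>x\<in>UNIV. P x y * u $ x) = (\<Sum>x\<in>UNIV. P x y * s $ x - c * (P x y * t $ x))"
      unfolding u by (intro sum.cong refl) (simp add: right_diff_distrib mult.left_commute)
    also have "\<dots> = (\<Sum>x\<in>UNIV. P x y * s $ x) - c * (\<Sum>x\<in>UNIV. P x y * t $ x)"
      by (simp only: sum_subtractf sum_distrib_left)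
    also have "\<dots> = s $ y - c * t $ y"
    proof -
      have "(\<Sum>x\<in>UNIV. P x y * s $ x) = s $ y" "(\<Sum>x\<in>UNIV. P x y * t $ x) = t $ y"
        using s(2) t(2) unfolding invariant_def by metis+
      then show ?thesis by simp
    qed
    finally show "u $ y = (\<Sum>x\<in>UNIV. P x y * u $ x)" by (simp add: u)
  qed
  have usum: "(\<Sum>x\<in>UNIV. u $ x) = 1 - c"
    using s(1) t(1) by (simp add: u sum_subtractf sum_distrib_left[symmetric] prob_vec_def)
  have c1: "c \<ge> 1"
  proof (rule ccontr)
    assume "\<not> c \<ge> 1"
    define v where "v = (1 / (1 - c)) *\<^sub>R u"
    have v: "v $ x = u $ x / (1 - c)" for x by (simp add: v_def)
    have "prob_vec v"
      unfolding prob_vec_def using u_nonneg \<open>\<not> c \<ge> 1\<close>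
      by (auto simp: v sum_divide_distrib[symmetric] usum)
    moreover have "invariant P v" unfolding invariant_def
    proof
      fix y
      have eq: "u $ y = (\<Sum>x\<in>UNIV. P x y * u $ x)" using u_inv unfolding invariant_def by metis
      have "(\<Sum>x\<in>UNIV. P x y * v $ x) = (\<Sum>x\<in>UNIV. P x y * u $ x) / (1 - c)" by (simp add: v sum_divide_distrib)
      then show "v $ y = (\<Sum>x\<in>UNIV. P x y * v $ x)" using eq by (simp add: v)
    qed
    ultimately have "v $ x0 > 0" using inv_pos[OF P] by blast
    then show False by (simp add: v u0)
  qed
  have "0 \<le> (\<Sum>x\<in>UNIV. u $ x)" using u_nonneg by (intro sum_nonneg) auto
  then have "(\<Sum>x\<in>UNIV. u $ x) = 0" using usum c1 by linarith
  then have "\<forall>x. u $ x = 0" using u_nonneg by (simp add: sum_nonneg_eq_0_iff)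
  then have "c = 1" using usum by simp
  then show ?thesis using \<open>\<forall>x. u $ x = 0\<close> by (simp add: vec_eq_iff u)
qed

lemma pop_compact: "compact (pop_states :: (real^'x::finite) set)"
  unfolding compact_eq_bounded_closed
proof (rule conjI)
  have "pop_states \<subseteq> cbox (0::real^'x) 1"
  proof
    fix s :: "real^'x" assume "s \<in> pop_states"
    then have s: "\<forall>x. 0 \<le> s $ x" "(\<Sum>x\<in>UNIV. s $ x) = 1" by (auto simp: pop_states_def prob_vec_def)
    have "s $ i \<le> 1" for i using member_le_sum[of i UNIV "\<lambda>x. s $ x"] s by auto
    then show "s \<in> cbox 0 1" using s by (auto simp: mem_box_cart)
  qed
  then show "bounded (pop_states :: (real^'x) set)" using bounded_cbox bounded_subset by blast
  have "pop_states = {s::real^'x. \<forall>x. 0 \<le> s $ x} \<inter> {s. (\<Sum>x\<in>UNIV. s $ x) = 1}"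
    by (auto simp: pop_states_def prob_vec_def)
  also have "closed \<dots>"
    by (intro closed_Int closed_Collect_all closed_Collect_le closed_Collect_eq continuous_intros continuous_on_component)
  finally show "closed (pop_states :: (real^'x) set)" .
qed

lemma pop_convex: "convex (pop_states :: (real^'x::finite) set)"
proof (rule convexI)
  fix s t :: "real^'x" and u v :: real
  assume "s \<in> pop_states" "t \<in> pop_states" "0 \<le> u" "0 \<le> v" "u + v = 1"
  then show "u *\<^sub>R s + v *\<^sub>R t \<in> pop_states"
    by (auto simp: pop_states_def prob_vec_def sum.distrib sum_distrib_left[symmetric])
qed

lemma pop_nonempty: "(pop_states :: (real^'x::finite) set) \<noteq> {}"
proof -
  have "(\<chi> x::'x. 1 / real CARD('x)) \<in> (pop_states :: (real^'x) set)"
    by (auto simp: pop_states_def prob_vec_def)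
  then show ?thesis by blast
qed

lemma inv_exists:
  fixes P :: "'x::finite \<Rightarrow> 'x \<Rightarrow> real"
  assumes P: "stoch P"
  shows "\<exists>s. prob_vec s \<and> invariant P s"
proof -
  define T where "T s = (\<chi> y. \<Sum>x\<in>UNIV. P x y * s $ x)" for s :: "real^'x"
  have Tc: "continuous_on pop_states T" unfolding T_def
    by (intro continuous_on_vec_lambda continuous_on_sum continuous_on_mult continuous_on_const continuous_on_component continuous_on_id)
  moreover have Tin: "T \<in> pop_states \<rightarrow> pop_states"
  proof
    fix s :: "real^'x" assume "s \<in> pop_states"
    then have s: "\<forall>x. 0 \<le> s $ x" "(\<Sum>x\<in>UNIV. s $ x) = 1" by (auto simp: pop_states_def prob_vec_def)
    have "(\<Sum>y\<in>UNIV. \<Sum>x\<in>UNIV. P x y * s $ x) = (\<Sum>x\<in>UNIV. \<Sum>y\<in>UNIV. P x y * s $ x)" by (rule sum.swap)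
    also have "\<dots> = (\<Sum>x\<in>UNIV. s $ x * (\<Sum>y\<in>UNIV. P x y))" by (simp add: sum_distrib_left mult_ac)
    also have "\<dots> = 1" using P s by (simp add: stoch_def)
    finally have sum1: "(\<Sum>y\<in>UNIV. \<Sum>x\<in>UNIV. P x y * s $ x) = 1" .
    have "0 \<le> (\<Sum>x\<in>UNIV. P x y * s $ x)" for y
      using P s(1) unfolding stoch_def by (intro sum_nonneg mult_nonneg_nonneg) auto
    then show "T s \<in> pop_states" using sum1 unfolding T_def pop_states_def prob_vec_def by simp
  qed
  obtain s where "s \<in> pop_states" "T s = s"
    by (rule brouwer[OF pop_compact pop_convex pop_nonempty Tc Tin])
  then have "prob_vec s" "\<forall>y. (\<Sum>x\<in>UNIV. P x y * s $ x) = s $ y"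
    unfolding T_def pop_states_def vec_eq_iff by auto
  then show ?thesis unfolding invariant_def by auto
qed

lemma inv_dist_prop:
  assumes "stoch P" "irreducible P"
  shows "prob_vec (inv_dist P) \<and> invariant P (inv_dist P)"
    and "prob_vec s \<Longrightarrow> invariant P s \<Longrightarrow> inv_dist P = s"
proof -
  have ex1: "\<exists>!s. prob_vec s \<and> invariant P s"
  proof (rule ex_ex1I)
    show "\<exists>s. prob_vec s \<and> invariant P s" by (rule inv_exists[OF assms(1)])
    fix s t assume "prob_vec s \<and> invariant P s" "prob_vec t \<and> invariant P t"
    then show "s = t" using inv_unique[OF assms] by blast
  qed
  show "prob_vec (inv_dist P) \<and> invariant P (inv_dist P)"
    unfolding inv_dist_def by (rule theI'[OF ex1])
  show "prob_vec s \<Longrightarrow> invariant P s \<Longrightarrow> inv_dist P = s"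
    unfolding inv_dist_def using ex1 by (intro the1_equality) auto
qed

lemma bisect_inv:
  assumes "a \<le> b" "f a \<le> 0" "0 \<le> f b"
  shows "a \<le> fst (bisect f a b t) \<and> fst (bisect f a b t) \<le> snd (bisect f a b t) \<and> snd (bisect f a b t) \<le> b
         \<and> f (fst (bisect f a b t)) \<le> 0 \<and> 0 \<le> f (snd (bisect f a b t))"
proof (induction t)
  case 0
  then show ?case using assms by simp
next
  case (Suc t)
  obtain l u where lu: "bisect f a b t = (l, u)" by fastforce
  show ?case using Suc.IH unfolding bisect.simps lu Let_def by (auto simp: not_less)
qed

lemma bisect_mono:
  "fst (bisect f a b t) \<le> fst (bisect f a b (Suc t)) \<and> snd (bisect f a b (Suc t)) \<le> snd (bisect f a b t)
   \<or> \<not> fst (bisect f a b t) \<le> snd (bisect f a b t)"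
proof -
  obtain l u where lu: "bisect f a b t = (l, u)" by fastforce
  show ?thesis unfolding bisect.simps lu Let_def by auto
qed

lemma bisect_stop:
  assumes "f (midpt f a b T) = 0"
  shows "bisect f a b (T + k) = bisect f a b T"
proof (induction k)
  case 0 then show ?case by simp
next
  case (Suc k)
  obtain l u where lu: "bisect f a b T = (l, u)" by fastforce
  have "f ((l + u) / 2) = 0" using assms lu by (simp add: midpt_def)
  then show ?case using Suc.IH lu by (simp add: Let_def)
qed

lemma bisect_half:
  assumes "f (midpt f a b t) \<noteq> 0"
  shows "snd (bisect f a b (Suc t)) - fst (bisect f a b (Suc t)) = (snd (bisect f a b t) - fst (bisect f a b t)) / 2"
proof -
  obtain l u where lu: "bisect f a b t = (l, u)" by fastforce
  have "f ((l + u) / 2) \<noteq> 0" using assms lu by (simp add: midpt_def)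
  then show ?thesis using lu by (auto simp: Let_def field_simps)
qed

lemma bisect_conv:
  fixes f :: "real \<Rightarrow> real"
  assumes cont: "continuous_on {a..b} f" and ab: "a \<le> b" and fa: "f a \<le> 0" and fb: "0 \<le> f b"
  shows "\<exists>ms\<in>{a..b}. midpt f a b \<longlonglongrightarrow> ms \<and> f ms = 0"
proof (cases "\<exists>T. f (midpt f a b T) = 0")
  case True
  then obtain T where T: "f (midpt f a b T) = 0" by blast
  have "midpt f a b (T + k) = midpt f a b T" for k unfolding midpt_def using bisect_stop[of f a b T, OF T] by simp
  then have ev: "eventually (\<lambda>n. midpt f a b n = midpt f a b T) sequentially"
    unfolding eventually_sequentially by (metis le_add_diff_inverse)
  have lim: "midpt f a b \<longlonglongrightarrow> midpt f a b T"
    by (rule tendsto_eventually[OF ev])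
  have "midpt f a b T \<in> {a..b}" using bisect_inv[OF ab fa fb, of T] unfolding midpt_def by auto
  then show ?thesis using lim T by blast
next
  case False
  define l where "l t = fst (bisect f a b t)" for t
  define u where "u t = snd (bisect f a b t)" for t
  have inv: "a \<le> l t" "l t \<le> u t" "u t \<le> b" "f (l t) \<le> 0" "0 \<le> f (u t)" for t
    using bisect_inv[OF ab fa fb, of t] unfolding l_def u_def by auto
  have mono: "l t \<le> l (Suc t)" "u (Suc t) \<le> u t" for t
    using bisect_mono[of f a b t] inv[of t] unfolding l_def u_def by auto
  have width: "u t - l t = (b - a) * (1/2) ^ t" for t
  proof (induction t)
    case 0 then show ?case by (simp add: l_def u_def)
  next
    case (Suc t)
    have "u (Suc t) - l (Suc t) = (u t - l t) / 2"
      using bisect_half[of f a b t] False unfolding l_def u_def by blast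
    then show ?case using Suc.IH by simp
  qed
  have "incseq l" using mono(1) by (simp add: incseq_SucI)
  then obtain L where Ll: "l \<longlonglongrightarrow> L" using inv(2,3) incseq_convergent[of l b] by (meson order_trans)
  have "(\<lambda>t. (b - a) * (1/2::real) ^ t) \<longlonglongrightarrow> (b - a) * 0"
    by (intro tendsto_mult tendsto_const LIMSEQ_power_zero) simp
  then have w0: "(\<lambda>t. (b - a) * (1/2::real) ^ t) \<longlonglongrightarrow> 0" by simp
  have uL: "u \<longlonglongrightarrow> L"
  proof -
    have "(\<lambda>t. l t + (b - a) * (1/2::real) ^ t) \<longlonglongrightarrow> L + 0" by (intro tendsto_add Ll w0)
    moreover have "u = (\<lambda>t. l t + (b - a) * (1/2::real) ^ t)"
    proof
      fix t show "u t = l t + (b - a) * (1/2::real) ^ t" using width[of t] by linarith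
    qed
    ultimately show ?thesis by simp
  qed
  have mL: "midpt f a b \<longlonglongrightarrow> L"
  proof -
    have "(\<lambda>t. (l t + u t) / 2) \<longlonglongrightarrow> (L + L) / 2" by (intro tendsto_divide tendsto_add Ll uL tendsto_const) simp
    then show ?thesis unfolding midpt_def l_def u_def by simp
  qed
  have La: "a \<le> L" using inv(1) by (intro LIMSEQ_le_const[OF Ll]) auto
  have Lb: "L \<le> b" using inv(2,3) by (intro LIMSEQ_le_const2[OF Ll]) (meson order_trans)
  have Lin: "L \<in> {a..b}" using La Lb by simp
  have lin: "l t \<in> {a..b}" "u t \<in> {a..b}" for t
    using inv(1)[of t] inv(2)[of t] inv(3)[of t] by auto
  have fl: "(\<lambda>t. f (l t)) \<longlonglongrightarrow> f L"
    by (rule continuous_on_tendsto_compose[OF cont Ll Lin]) (rule always_eventually, use lin in blast)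
  have fu: "(\<lambda>t. f (u t)) \<longlonglongrightarrow> f L"
    by (rule continuous_on_tendsto_compose[OF cont uL Lin]) (rule always_eventually, use lin in blast)
  have "f L \<le> 0" using inv(4) by (intro LIMSEQ_le_const2[OF fl]) auto
  moreover have "0 \<le> f L" using inv(5) by (intro LIMSEQ_le_const[OF fu]) auto
  ultimately show ?thesis using Lin mL by (intro bexI[of _ L]) auto
qed

locale mfg4 = mfg3 A \<Gamma> a b q w payoff beta g
  for A :: "'a::euclidean_space set"
    and \<Gamma> :: "'x::finite \<Rightarrow> 'a set"
    and a b :: real
    and q :: "'e::metric_space measure"
    and w :: "'x \<Rightarrow> 'a \<Rightarrow> real \<Rightarrow> 'e \<Rightarrow> 'x"
    and payoff :: "'x \<Rightarrow> 'a \<Rightarrow> real \<Rightarrow> real"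
    and beta :: real
    and g :: "'x \<Rightarrow> real \<Rightarrow> 'a" +
  fixes M :: "real^'x \<Rightarrow> real"
  assumes M_cont: "continuous_on pop_states M"
    and M_range: "M ` pop_states \<subseteq> {a..b}"
    and irred: "\<forall>m\<in>{a..b}. irreducible (L w q g m)"
begin

lemma L_stoch: "m \<in> {a..b} \<Longrightarrow> stoch (L w q g m)"
  unfolding stoch_def using L_nonneg L_sum1 by blast

abbreviation sd where "sd m \<equiv> inv_dist (L w q g m)"

lemma sd_prop: "m \<in> {a..b} \<Longrightarrow> prob_vec (sd m) \<and> invariant (L w q g m) (sd m)"
  using inv_dist_prop(1)[OF L_stoch] irred by blast

lemma sd_unique: "m \<in> {a..b} \<Longrightarrow> prob_vec s \<Longrightarrow> invariant (L w q g m) s \<Longrightarrow> sd m = s"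
  using inv_dist_prop(2)[OF L_stoch] irred by blast

lemma sd_pop: "m \<in> {a..b} \<Longrightarrow> sd m \<in> pop_states"
  using sd_prop by (simp add: pop_states_def)

lemma sd_cont: "continuous_on {a..b} sd"
proof (rule continuous_from_closed_graph[where T=pop_states])
  show "compact (pop_states :: (real^'x) set)" by (rule pop_compact)
  show "sd \<in> {a..b} \<rightarrow> pop_states" using sd_pop by blast
  define S where "S = {a..b} \<times> (pop_states :: (real^'x) set)"
  have Sc: "closed S" unfolding S_def using pop_compact by (intro closed_Times compact_imp_closed) auto
  define k where "k y p = (snd p) $ y - (\<Sum>x\<in>UNIV. L w q g (fst p) x y * (snd p) $ x)" for y and p :: "real \<times> (real^'x)"
  have kc: "continuous_on S (k y)" for y
  proof -
    have cL: "continuous_on S (\<lambda>p. L w q g (fst p) x y)" for x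
      by (rule continuous_on_compose2[OF L_cont continuous_on_fst[OF continuous_on_id]]) (auto simp: S_def)
    have cs: "continuous_on S (\<lambda>p. (snd p) $ x)" for x
      by (intro continuous_on_component continuous_on_snd continuous_on_id)
    show ?thesis unfolding k_def
      by (intro continuous_on_diff cs continuous_on_sum continuous_on_mult cL)
  qed
  have eq: "(\<lambda>m. (m, sd m)) ` {a..b} = S \<inter> (\<Inter>y. S \<inter> k y -` {0})"
  proof (intro equalityI subsetI)
    fix p assume "p \<in> (\<lambda>m. (m, sd m)) ` {a..b}"
    then obtain m where m: "m \<in> {a..b}" "p = (m, sd m)" by blast
    have "invariant (L w q g m) (sd m)" using sd_prop[OF m(1)] by blast
    then have inv: "(sd m) $ y = (\<Sum>x\<in>UNIV. L w q g m x y * (sd m) $ x)" for y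
      unfolding invariant_def by blast
    have "k y p = 0" for y unfolding k_def m(2) fst_conv snd_conv
      using inv[of y] by (simp only: right_minus_eq)
    then show "p \<in> S \<inter> (\<Inter>y. S \<inter> k y -` {0})"
      using m sd_pop unfolding S_def by auto
  next
    fix p assume p: "p \<in> S \<inter> (\<Inter>y. S \<inter> k y -` {0})"
    obtain m s where pm: "p = (m, s)" by fastforce
    have m: "m \<in> {a..b}" and s: "s \<in> pop_states" using p pm by (auto simp: S_def)
    have kz: "k y p = 0" for y using p by blast
    have "s $ y = (\<Sum>x\<in>UNIV. L w q g m x y * s $ x)" for y
      using kz[of y] unfolding k_def pm fst_conv snd_conv by (simp only: right_minus_eq)
    then have "invariant (L w q g m) s" unfolding invariant_def by blast
    then have "sd m = s" using sd_unique[OF m] s by (simp add: pop_states_def)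
    then show "p \<in> (\<lambda>m. (m, sd m)) ` {a..b}" using pm m by blast
  qed
  show "closed ((\<lambda>m. (m, sd m)) ` {a..b})"
  proof -
    have cl: "closed (S \<inter> k y -` {0})" for y
      by (rule continuous_closed_preimage[OF kc Sc closed_singleton])
    show ?thesis unfolding eq using Sc cl by (intro closed_Int closed_INT) auto
  qed
qed

lemma main:
  "\<exists>ms\<in>{a..b}. midpt (\<lambda>m. m - M (sd m)) a b \<longlonglongrightarrow> ms \<and> (\<lambda>m. m - M (sd m)) ms = 0
     \<and> is_MFE payoff w q beta \<Gamma> M (\<lambda>x _. g x ms) (sd ms)"
proof -
  let ?f = "\<lambda>m. m - M (sd m)"
  have fc: "continuous_on {a..b} ?f"
  proof (intro continuous_on_diff continuous_on_id)
    show "continuous_on {a..b} (\<lambda>m. M (sd m))"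
      by (rule continuous_on_compose2[OF M_cont sd_cont]) (use sd_pop in blast)
  qed
  have Ma: "M (sd m) \<in> {a..b}" if "m \<in> {a..b}" for m using M_range sd_pop[OF that] by blast
  have fa: "?f a \<le> 0" using Ma[of a] ab by simp
  have fb: "0 \<le> ?f b" using Ma[of b] ab by simp
  obtain ms where ms: "ms \<in> {a..b}" "midpt ?f a b \<longlonglongrightarrow> ms" "?f ms = 0"
    using bisect_conv[OF fc _ fa fb] ab by auto
  have Ms: "M (sd ms) = ms" using ms(3) by simp
  have c1: "prob_vec (sd ms)" using sd_prop[OF ms(1)] by blast
  have c2: "\<forall>x. g x ms \<in> G payoff w q beta \<Gamma> x (M (sd ms))"
    unfolding Ms using single_valued ms(1) by simp
  have Lrew: "L w q (\<lambda>x _. g x ms) (M (sd ms)) = L w q g ms"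
    unfolding Ms by (intro ext) (simp add: L_def)
  have c3: "\<forall>y. (sd ms) $ y = (\<Sum>x\<in>UNIV. L w q (\<lambda>x _. g x ms) (M (sd ms)) x y * (sd ms) $ x)"
    unfolding Lrew using sd_prop[OF ms(1)] unfolding invariant_def by blast
  have "is_MFE payoff w q beta \<Gamma> M (\<lambda>x _. g x ms) (sd ms)"
    unfolding is_MFE_def using c1 c2 c3 by blast
  then show ?thesis using ms by blast
qed

end

theorem theorem1:
  fixes A :: "'a::euclidean_space set"
    and \<Gamma> :: "'x::finite \<Rightarrow> 'a set"
    and M :: "real^'x \<Rightarrow> real"
    and a b :: real
    and q :: "'e::metric_space measure"
    and w :: "'x \<Rightarrow> 'a \<Rightarrow> real \<Rightarrow> 'e \<Rightarrow> 'x"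
    and payoff :: "'x \<Rightarrow> 'a \<Rightarrow> real \<Rightarrow> real"
    and beta :: real
    and g :: "'x \<Rightarrow> real \<Rightarrow> 'a"
  assumes ab: "a < b"
    and Gamma: "\<forall>x. \<Gamma> x \<noteq> {} \<and> compact (\<Gamma> x) \<and> \<Gamma> x \<subseteq> A"
    and M_cont: "continuous_on pop_states M"
    and M_range: "M ` pop_states \<subseteq> {a..b}"
    and q_prob: "prob_space q"
    and q_sets: "sets q = sets borel"
    and E_compact: "compact (UNIV :: 'e set)"
    and w_cont: "\<forall>x. continuous_map (top_of_set (A \<times> {a..b} \<times> UNIV)) (discrete_topology UNIV)
                        (\<lambda>(a', m, \<zeta>). w x a' m \<zeta>)"
    and pi_bounded: "\<exists>B. \<forall>x a' m. a' \<in> A \<longrightarrow> m \<in> {a..b} \<longrightarrow> \<bar>payoff x a' m\<bar> \<le> B"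
    and pi_cont: "\<forall>x. continuous_on (A \<times> {a..b}) (\<lambda>(a', m). payoff x a' m)"
    and beta: "0 < beta" "beta < 1"
    and single_valued: "\<forall>m\<in>{a..b}. \<forall>x. G payoff w q beta \<Gamma> x m = {g x m}"
    and irred: "\<forall>m\<in>{a..b}. irreducible (L w q g m)"
    and aper: "\<forall>m\<in>{a..b}. aperiodic (L w q g m)"
  shows "let f = (\<lambda>m. m - M (inv_dist (L w q g m))) in
         \<exists>m\<^sub>s\<in>{a..b}. midpt f a b \<longlonglongrightarrow> m\<^sub>s \<and> f m\<^sub>s = 0
             \<and> is_MFE payoff w q beta \<Gamma> M (\<lambda>x _. g x m\<^sub>s) (inv_dist (L w q g m\<^sub>s))"
  proof -
  have "mfg4 A \<Gamma> a b q w payoff beta g M"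
    unfolding mfg4_def mfg3_def mfg2_def mfg_def mfg4_axioms_def mfg3_axioms_def mfg2_axioms_def
    by (intro conjI ab Gamma q_prob q_sets w_cont pi_bounded pi_cont beta(1) beta(2) single_valued M_cont M_range irred)
  then interpret mfg4 A \<Gamma> a b q w payoff beta g M .
  show ?thesis unfolding Let_def using main by blast
qed

end
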